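(* Let $h\colon(0,\infty)\to(0,\infty)$ be non-decreasing and continuous, and let $\Theta$ be any one of $\Theta^0_h,\Theta^\infty_h,\Theta_h$. Then either $\lim_{r\to0^+}\Theta(r)=0$, or $\Theta(r)=1$ for every $r\in(0,1]$.
   Context: For $h\colon(0,\infty)\to(0,\infty)$ and $r>0$: $\Theta^0_h(r)=\limsup_{t\to0^+}h(rt)/h(t)$, $\Theta^\infty_h(r)=\limsup_{t\to\infty}h(rt)/h(t)$, $\Theta_h(r)=\sup_{t>0}h(rt)/h(t)$. *)

theory Defs
  imports "HOL-Analysis.Analysis"
begin

text \<open>Dilation indices of h : (0,oo) -> (0,oo), valued in the extended reals
  (they may be +oo for r > 1).\<close>

definition Theta0 :: "(real \<Rightarrow> real) \<Rightarrow> real \<Rightarrow> ereal" where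
  "Theta0 h r = Limsup (at_right 0) (\<lambda>t. ereal (h (r * t) / h t))"

definition ThetaInf :: "(real \<Rightarrow> real) \<Rightarrow> real \<Rightarrow> ereal" where
  "ThetaInf h r = Limsup at_top (\<lambda>t. ereal (h (r * t) / h t))"

definition ThetaSup :: "(real \<Rightarrow> real) \<Rightarrow> real \<Rightarrow> ereal" where
  "ThetaSup h r = (SUP t\<in>{0<..}. ereal (h (r * t) / h t))"

end

theory Submission
  imports Defs
begin

lemma Limsup_principal_eq:
  "Limsup (principal S) f = (SUP x\<in>S. f x)"
proof (rule antisym)
  show "Limsup (principal S) f \<le> (SUP x\<in>S. f x)"
    unfolding Limsup_def eventually_principal
    by (rule INF_lower2[of "\<lambda>x. x \<in> S"]) auto
  show "(SUP x\<in>S. f x) \<le> Limsup (principal S) f"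
    unfolding Limsup_def eventually_principal
    by (rule INF_greatest, rule SUP_subset_mono) auto
qed

lemma main_abstract:
  fixes h :: "real \<Rightarrow> real" and F :: "real filter"
  assumes pos: "\<And>t. t > 0 \<Longrightarrow> h t > 0"
    and mono: "mono_on {0<..} h"
    and Fne: "F \<noteq> bot"
    and Fpos: "eventually (\<lambda>t. t > 0) F"
    and Fsc: "\<And>s P. s > 0 \<Longrightarrow> eventually P F \<Longrightarrow> eventually (\<lambda>t. P (s * t)) F"
    and Th: "\<And>r. \<Theta> r = Limsup F (\<lambda>t. ereal (h (r * t) / h t))"
  shows "(\<Theta> \<longlongrightarrow> 0) (at_right 0) \<or> (\<forall>r\<in>{0<..1}. \<Theta> r = 1)"
proof (cases "\<forall>r\<in>{0<..1}. \<Theta> r = 1")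
  case True then show ?thesis by blast
next
  case False
  have ge0: "\<Theta> r \<ge> 0" if "r > 0" for r
    unfolding Th
    by (rule le_Limsup[OF Fne], rule eventually_mono[OF Fpos])
       (use that pos in \<open>auto intro!: divide_nonneg_pos less_imp_le\<close>)
  have le1: "\<Theta> r \<le> 1" if "r > 0" "r \<le> 1" for r
    unfolding Th
  proof (rule Limsup_bounded, rule eventually_mono[OF Fpos])
    fix t :: real assume t: "t > 0"
    have "h (r*t) \<le> h t" using mono t that
      by (intro mono_onD[OF mono]) (auto simp: mult_le_cancel_right1)
    then show "ereal (h (r * t) / h t) \<le> 1" using pos[OF t] by simp
  qed
  have monoT: "\<Theta> r \<le> \<Theta> r'" if "0 < r" "r \<le> r'" for r r'
    unfolding Th
  proof (rule Limsup_mono, rule eventually_mono[OF Fpos])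
    fix t :: real assume t: "t > 0"
    have "h (r*t) \<le> h (r'*t)" using t that
      by (intro mono_onD[OF mono]) auto
    then show "ereal (h (r * t) / h t) \<le> ereal (h (r' * t) / h t)" using pos[OF t]
      by (simp add: divide_right_mono)
  qed
  from False obtain r0 where r0: "0 < r0" "r0 \<le> 1" "\<Theta> r0 \<noteq> 1" by auto
  have "\<Theta> r0 < 1" using le1[OF r0(1,2)] r0(3) by simp
  then obtain q :: real where q: "\<Theta> r0 < q" "q < 1"
    using ereal_dense2[of "\<Theta> r0" 1] by auto
  have q0: "q > 0" proof -
    have "0 < ereal q" using ge0[OF r0(1)] q(1) by (rule order_le_less_trans)
    then show ?thesis by simp
  qed
  have ev0: "eventually (\<lambda>t. h (r0 * t) / h t < q) F"
    using Limsup_lessD[OF q(1)[unfolded Th]] by simp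
  have evn: "eventually (\<lambda>t. h (r0^n * t) / h t \<le> q^n) F" for n
  proof (induction n)
    case 0 show ?case by (rule eventually_mono[OF Fpos]) (use pos in auto)
  next
    case (Suc n)
    have e1: "eventually (\<lambda>t. h (r0 * (r0^n * t)) / h (r0^n * t) < q) F"
      using Fsc[OF _ ev0, of "r0^n"] r0(1) by simp
    show ?case
    proof (rule eventually_mono[OF eventually_conj[OF Fpos eventually_conj[OF e1 Suc.IH]]])
      fix t :: real assume a: "0 < t \<and> h (r0 * (r0^n * t)) / h (r0^n * t) < q \<and> h (r0^n * t) / h t \<le> q^n"
      have t: "t > 0" and pn: "r0^n * t > 0" using a r0(1) by auto
      have eq: "h (r0^Suc n * t) / h t = (h (r0 * (r0^n * t)) / h (r0^n * t)) * (h (r0^n * t) / h t)"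
        using pos[OF pn] by (simp add: mult.assoc)
      have pr: "(h (r0 * (r0^n * t)) / h (r0^n * t)) * (h (r0^n * t) / h t) \<le> q * q^n"
        using a pos[OF t] pos[OF pn] pos[of "r0 * (r0^n * t)"] r0(1) q0
        by (intro mult_mono) auto
      show "h (r0^Suc n * t) / h t \<le> q^Suc n" unfolding eq power_Suc[of q] by (rule pr)
    qed
  qed
  have Tn: "\<Theta> (r0^n) \<le> q^n" for n
    unfolding Th by (rule Limsup_bounded, rule eventually_mono[OF evn[of n]]) simp
  have "(\<Theta> \<longlongrightarrow> 0) (at_right 0)"
  proof (rule order_tendstoI)
    fix a :: ereal assume "a < 0"
    show "eventually (\<lambda>r. a < \<Theta> r) (at_right 0)"
    proof (rule eventually_mono[OF eventually_at_right_less[of "0::real"]])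
      fix r :: real assume "0 < r"
      then show "a < \<Theta> r" using ge0[of r] \<open>a < 0\<close> by (rule_tac order_less_le_trans) auto
    qed
  next
    fix a :: ereal assume a: "0 < a"
    show "eventually (\<lambda>r. \<Theta> r < a) (at_right 0)"
    proof (cases a)
      case (real b)
      with a have b: "b > 0" by simp
      obtain n where n: "q^n < b" using real_arch_pow_inv[OF b q(2)] by blast
      have "\<Theta> r < a" if "0 < r" "r < r0^n" for r
      proof -
        have "\<Theta> r \<le> \<Theta> (r0^n)" using monoT that by simp
        also have "\<dots> \<le> q^n" by (rule Tn)
        also have "ereal (q^n) < a" using n real by simp
        finally show ?thesis .
      qed
      then show ?thesis unfolding eventually_at_right_field
        using r0(1) by (intro exI[of _ "r0^n"]) auto
    next
      case PInf
      have "\<Theta> r < a" if "0 < r" "r < 1" for r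
        using le1[of r] that PInf by (auto intro: order_le_less_trans)
      then show ?thesis unfolding eventually_at_right_field
        by (intro exI[of _ 1]) auto
    next
      case MInf with a show ?thesis by simp
    qed
  qed
  then show ?thesis by blast
qed

theorem corollary4p6:
  fixes h :: "real \<Rightarrow> real" and \<Theta> :: "real \<Rightarrow> ereal"
  assumes pos: "\<And>t. t > 0 \<Longrightarrow> h t > 0"
    and mono: "mono_on {0<..} h"
    and cont: "continuous_on {0<..} h"
    and Theta: "\<Theta> \<in> {Theta0 h, ThetaInf h, ThetaSup h}"
  shows "(\<Theta> \<longlongrightarrow> 0) (at_right 0) \<or> (\<forall>r\<in>{0<..1}. \<Theta> r = 1)"
proof -
  consider "\<Theta> = Theta0 h" | "\<Theta> = ThetaInf h" | "\<Theta> = ThetaSup h" using Theta by blast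
  then show ?thesis
  proof cases
    case 1
    show ?thesis
    proof (rule main_abstract[OF pos mono, of "at_right 0"])
      show "eventually (\<lambda>t. t > 0) (at_right (0::real))" by (rule eventually_at_right_less)
      fix s :: real and P :: "real \<Rightarrow> bool" assume s: "s > 0" and P: "eventually P (at_right 0)"
      from P[unfolded eventually_at_right_field] obtain b where b: "b > 0" "\<And>y. 0 < y \<Longrightarrow> y < b \<Longrightarrow> P y"
        by auto
      show "eventually (\<lambda>t. P (s * t)) (at_right 0)"
        unfolding eventually_at_right_field
        using s b by (intro exI[of _ "b / s"]) (auto simp: field_simps)
    qed (auto simp: 1 Theta0_def)
  next
    case 2
    show ?thesis
    proof (rule main_abstract[OF pos mono, of at_top])
      show "eventually (\<lambda>t. t > 0) (at_top :: real filter)" by (rule eventually_gt_at_top)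
      fix s :: real and P :: "real \<Rightarrow> bool" assume s: "s > 0" and P: "eventually P at_top"
      from P[unfolded eventually_at_top_linorder] obtain N where N: "\<And>y. y \<ge> N \<Longrightarrow> P y"
        by auto
      show "eventually (\<lambda>t. P (s * t)) at_top"
        unfolding eventually_at_top_linorder
        using s N by (intro exI[of _ "N / s"]) (auto simp: field_simps)
    qed (auto simp: 2 ThetaInf_def)
  next
    case 3
    have ne: "principal {0::real<..} \<noteq> bot"
      unfolding principal_eq_bot_iff using greaterThan_iff[of 1 "0::real"] by auto
    show ?thesis
      by (rule main_abstract[OF pos mono ne])
         (auto simp: 3 ThetaSup_def Limsup_principal_eq eventually_principal)
  qed
qed

end
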